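(* For all integers $N\ge2$ and real $0<\theta<2\pi$, $$\prod_{j=1}^N\big|e^{ij\theta/N}-1\big|^{-1}<\frac{2N}{\theta\sin(\theta/2)}\exp\Big(N\frac{\mathrm{Cl}_2(\theta)}{\theta}\Big).$$
   Context: $\mathrm{Cl}_2(\theta):=\sum_{k\ge1}k^{-2}\sin(k\theta)$ is the Clausen function. *)

theory Defs
  imports "HOL-Analysis.Analysis"
begin

definition clausen2 :: "real \<Rightarrow> real" where
  "clausen2 \<theta> = (\<Sum>k. sin (real (Suc k) * \<theta>) / (real (Suc k))^2)"

end

theory Submission
  imports Defs "HOL-Real_Asymp.Real_Asymp"
begin


definition Hs :: "real \<Rightarrow> real \<Rightarrow> real" where
  "Hs r t = (\<Sum>k. r^(Suc k) * sin (real (Suc k) * t) / (real (Suc k))^2)"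

definition Lf :: "real \<Rightarrow> real \<Rightarrow> real" where
  "Lf r t = - ln (cmod (1 - complex_of_real r * exp (\<i> * complex_of_real t)))"

lemma summable_M: "summable (\<lambda>k. 1 / (real (Suc k))^2)"
proof -
  have "summable (\<lambda>n. inverse (real n ^ 2))" by (rule inverse_power_summable) simp
  then have "summable (\<lambda>n. inverse (real (Suc n) ^ 2))" by (subst summable_Suc_iff)
  then show ?thesis by (simp add: divide_inverse)
qed

lemma Hs_one: "Hs 1 t = clausen2 t"
  by (simp add: Hs_def clausen2_def)

lemma cont_Hs_r: "continuous_on {0..1} (\<lambda>r. Hs r t)"
proof -
  have ul: "uniform_limit {0..1} (\<lambda>n r. \<Sum>i<n. r^(Suc i) * sin (real (Suc i) * t) / (real (Suc i))^2)
     (\<lambda>r. \<Sum>i. r^(Suc i) * sin (real (Suc i) * t) / (real (Suc i))^2) sequentially"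
  proof (rule Weierstrass_m_test[OF _ summable_M])
    fix n and r :: real assume r: "r \<in> {0..1}"
    have "\<bar>r^(Suc n) * sin (real (Suc n) * t)\<bar> \<le> 1"
      using r by (auto simp: abs_mult intro!: mult_le_one power_le_one abs_sin_le_one)
    then show "norm (r^(Suc n) * sin (real (Suc n) * t) / (real (Suc n))^2) \<le> 1 / (real (Suc n))^2"
      by (simp add: divide_right_mono)
  qed
  show ?thesis unfolding Hs_def
    by (rule uniform_limit_theorem[OF _ ul]) (auto intro!: always_eventually continuous_intros)
qed

lemma cont_C: "continuous_on UNIV clausen2"
proof -
  have ul: "uniform_limit UNIV (\<lambda>n t. \<Sum>i<n. sin (real (Suc i) * t) / (real (Suc i))^2)
     (\<lambda>t. \<Sum>i. sin (real (Suc i) * t) / (real (Suc i))^2) sequentially"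
  proof (rule Weierstrass_m_test[OF _ summable_M])
    fix n and t :: real
    show "norm (sin (real (Suc n) * t) / (real (Suc n))^2) \<le> 1 / (real (Suc n))^2"
      by (simp add: divide_right_mono)
  qed
  have eq: "clausen2 = (\<lambda>t. \<Sum>i. sin (real (Suc i) * t) / (real (Suc i))^2)"
    by (simp add: fun_eq_iff clausen2_def)
  show ?thesis unfolding eq
    by (rule uniform_limit_theorem[OF _ ul]) (auto intro!: always_eventually continuous_intros)
qed

lemma C0: "clausen2 0 = 0" by (simp add: clausen2_def)

lemma Lf_series:
  assumes "0 \<le> r" "r < 1"
  shows "(\<lambda>n. r^(Suc n) * cos (real (Suc n) * t) / real (Suc n)) sums Lf r t"
proof -
  define w where "w = complex_of_real r * exp (\<i> * complex_of_real t)"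
  have nw: "cmod w = r" using assms by (simp add: w_def norm_mult)
  have "(\<lambda>n. - ((-(-w))^n) / of_nat n) sums ln (1 + (-w))"
    by (rule Ln_series') (simp add: nw assms)
  then have "(\<lambda>n. - (w^n) / of_nat n) sums ln (1 - w)" by simp
  then have "(\<lambda>n. - (w^(Suc n)) / of_nat (Suc n)) sums ln (1 - w)"
    by (subst sums_Suc_iff) simp
  then have "(\<lambda>n. - (- (w^(Suc n)) / of_nat (Suc n))) sums - ln (1 - w)"
    by (rule sums_minus)
  then have "(\<lambda>n. Re (- (- (w^(Suc n)) / of_nat (Suc n)))) sums Re (- ln (1 - w))"
    by (rule sums_Re)
  moreover have "1 - w \<noteq> 0" using nw assms by auto
  moreover have "Re (- (- (w^(Suc n)) / of_nat (Suc n))) = r^(Suc n) * cos (real (Suc n) * t) / real (Suc n)" for n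
  proof -
    have "w^(Suc n) = complex_of_real (r^Suc n) * exp (of_nat (Suc n) * (\<i> * complex_of_real t))"
      unfolding w_def power_mult_distrib exp_of_nat_mult[symmetric] by simp
    also have "of_nat (Suc n) * (\<i> * complex_of_real t) = \<i> * complex_of_real (real (Suc n) * t)" by simp
    finally have "w^(Suc n) = complex_of_real (r^Suc n) * exp (\<i> * complex_of_real (real (Suc n) * t))" .
    then show ?thesis by (simp add: Re_divide_of_nat Re_exp)
  qed
  ultimately show ?thesis by (simp add: Lf_def w_def)
qed



lemma deriv_Hs:
  assumes "0 \<le> r" "r < 1"
  shows "((Hs r) has_real_derivative Lf r x) (at x)"
proof -
  define f where "f n t = (r^(Suc n) / (real (Suc n))^2) * sin (real (Suc n) * t)" for n t
  define f' where "f' n t = r^(Suc n) * cos (real (Suc n) * t) / real (Suc n)" for n t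
  have d: "(f n has_field_derivative f' n t) (at t within UNIV)" for n t
  proof -
    have "(f n has_field_derivative (r^(Suc n) / (real (Suc n))^2) * (cos (real (Suc n) * t) * real (Suc n))) (at t)"
      unfolding f_def by (rule derivative_eq_intros refl | simp)+
    moreover have "(r^(Suc n) / (real (Suc n))^2) * (cos (real (Suc n) * t) * real (Suc n)) = f' n t"
      unfolding f'_def by (simp add: power2_eq_square)
    ultimately show ?thesis by simp
  qed
  have sg: "summable (\<lambda>n. r^(Suc n))"
    using assms by (simp add: summable_geometric summable_mult)
  have uc: "uniformly_convergent_on UNIV (\<lambda>n x. \<Sum>i<n. f' i x)"
  proof (rule Weierstrass_m_test'[OF _ sg])
    fix n and x :: real
    have c1: "\<bar>cos (real (Suc n) * x)\<bar> \<le> real (Suc n)"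
      by (rule order_trans[OF abs_cos_le_one]) simp
    have q: "\<bar>cos (real (Suc n) * x)\<bar> / real (Suc n) \<le> 1"
      using c1 by (simp add: divide_le_eq)
    have "norm (f' n x) = r^(Suc n) * (\<bar>cos (real (Suc n) * x)\<bar> / real (Suc n))"
      unfolding f'_def using assms by (simp add: abs_mult)
    also have "\<dots> \<le> r^(Suc n)" by (rule mult_left_le[OF q]) (use assms in simp)
    finally show "norm (f' n x) \<le> r^(Suc n)" .
  qed
  have s0: "summable (\<lambda>n. f n 0)" by (simp add: f_def)
  have "((\<lambda>x. \<Sum>n. f n x) has_field_derivative (\<Sum>n. f' n x)) (at x)"
    by (rule has_field_derivative_series'(2)[OF _ d uc _ s0]) auto
  moreover have "(\<lambda>x. \<Sum>n. f n x) = Hs r" by (simp add: fun_eq_iff f_def Hs_def)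
  moreover have "(\<Sum>n. f' n x) = Lf r x"
    using Lf_series[OF assms, of x] by (simp add: f'_def sums_iff)
  ultimately show ?thesis by simp
qed

lemma normsq: "(cmod (1 - complex_of_real r * exp (\<i> * complex_of_real t)))^2 = 1 - 2*r*cos t + r^2"
proof -
  have 1: "Re (1 - complex_of_real r * exp (\<i> * complex_of_real t)) = 1 - r*cos t" by (simp add: Re_exp)
  have 2: "Im (1 - complex_of_real r * exp (\<i> * complex_of_real t)) = - (r * sin t)" by (simp add: Im_exp)
  have e0: "r*(r*(cos t * cos t)) + r*(r*(sin t * sin t)) = r*r*(cos t * cos t + sin t * sin t)"
    by (simp only: distrib_left mult.assoc)
  have e: "r*(r*(cos t * cos t)) + r*(r*(sin t * sin t)) = r*r"
    unfolding e0 sin_cos_squared_add3 by simp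
  show ?thesis unfolding cmod_power2 1 2 using e by (simp add: power2_eq_square algebra_simps)
qed



lemma cos_lt_1: "0 < x \<Longrightarrow> x < 2*pi \<Longrightarrow> cos x < 1"
proof -
  assume "0 < x" "x < 2*pi"
  then have "sin (x/2) > 0" by (intro sin_gt_zero) auto
  moreover have "cos x = 1 - 2 * sin (x/2)^2" using cos_double_sin[of "x/2"] by simp
  ultimately show ?thesis by simp
qed

lemma cos_le_max:
  assumes "0 < a" "a \<le> t" "t \<le> b" "b < 2*pi"
  shows "cos t \<le> max (cos a) (cos b)"
proof (cases "t \<le> pi")
  case True
  then have "cos t \<le> cos a" using assms by (intro cos_monotone_0_pi_le) auto
  then show ?thesis by simp
next
  case False
  then have "cos (2*pi - t) \<le> cos (2*pi - b)" using assms by (intro cos_monotone_0_pi_le) auto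
  then have "cos t \<le> cos b" by (simp add: cos_diff)
  then show ?thesis by simp
qed

lemma ln_lip:
  fixes c A B :: real
  assumes "0 < c" "c \<le> A" "c \<le> B"
  shows "\<bar>ln A - ln B\<bar> \<le> \<bar>A - B\<bar> / c"
proof -
  have A: "A > 0" using assms by linarith
  have B: "B > 0" using assms by linarith
  have "ln A - ln B = ln (A/B)" using A B by (simp add: ln_div)
  also have "\<dots> \<le> A/B - 1" using A B by (intro ln_le_minus_one) simp
  also have "\<dots> = (A - B)/B" using A B by (simp add: field_simps)
  also have "\<dots> \<le> \<bar>A - B\<bar>/B" using B by (intro divide_right_mono) auto
  also have "\<dots> \<le> \<bar>A - B\<bar>/c" using B assms by (intro divide_left_mono) auto
  finally have 1: "ln A - ln B \<le> \<bar>A - B\<bar>/c" .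
  have "ln B - ln A = ln (B/A)" using A B by (simp add: ln_div)
  also have "\<dots> \<le> B/A - 1" using A B by (intro ln_le_minus_one) simp
  also have "\<dots> = (B - A)/A" using A B by (simp add: field_simps)
  also have "\<dots> \<le> \<bar>B - A\<bar>/A" using A by (intro divide_right_mono) auto
  also have "\<dots> \<le> \<bar>B - A\<bar>/c" using A assms by (intro divide_left_mono) auto
  also have "\<bar>B - A\<bar> = \<bar>A - B\<bar>" by simp
  finally have 2: "ln B - ln A \<le> \<bar>A - B\<bar>/c" .
  from 1 2 show ?thesis by linarith
qed

lemma Lf_unif:
  assumes "0 < a" "a \<le> b" "b < 2*pi"
  shows "\<exists>c>0. \<forall>r t. 1/2 \<le> r \<longrightarrow> r \<le> 1 \<longrightarrow> a \<le> t \<longrightarrow> t \<le> b \<longrightarrow> \<bar>Lf r t - Lf 1 t\<bar> \<le> (1-r)/c"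
proof -
  define m where "m = 1 - max (cos a) (cos b)"
  have m: "m > 0" using cos_lt_1[of a] cos_lt_1[of b] assms by (auto simp: m_def)
  define c where "c = sqrt m"
  have c: "c > 0" using m by (simp add: c_def)
  have lb: "c \<le> cmod (1 - complex_of_real r * exp (\<i> * complex_of_real t))"
    if "1/2 \<le> r" "r \<le> 1" "a \<le> t" "t \<le> b" for r t
  proof -
    have "cos t \<le> 1 - m" using cos_le_max[of a t b] assms that by (simp add: m_def)
    then have mm: "m \<le> 1 - cos t" by simp
    have "1 * (1 - cos t) \<le> (2*r) * (1 - cos t)"
      by (rule mult_right_mono) (use that in auto)
    then have "m \<le> 2*r*(1 - cos t)" using mm by simp
    also have "\<dots> \<le> (1-r)^2 + 2*r*(1 - cos t)" by simp
    also have "\<dots> = (cmod (1 - complex_of_real r * exp (\<i> * complex_of_real t)))^2"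
      unfolding normsq by (simp add: power2_eq_square algebra_simps)
    finally show ?thesis unfolding c_def by (simp add: real_sqrt_le_iff real_le_lsqrt)
  qed
  show ?thesis
  proof (intro exI[of _ c] conjI allI impI c)
    fix r t :: real assume rt: "1/2 \<le> r" "r \<le> 1" "a \<le> t" "t \<le> b"
    define A where "A = cmod (1 - complex_of_real r * exp (\<i> * complex_of_real t))"
    define B where "B = cmod (1 - complex_of_real 1 * exp (\<i> * complex_of_real t))"
    have cA: "c \<le> A" unfolding A_def using lb rt by auto
    have cB: "c \<le> B" unfolding B_def using lb[of 1 t] rt by auto
    have "\<bar>A - B\<bar> \<le> cmod ((1 - complex_of_real r * exp (\<i> * complex_of_real t)) - (1 - complex_of_real 1 * exp (\<i> * complex_of_real t)))"
      unfolding A_def B_def by (rule norm_triangle_ineq3)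
    also have "(1 - complex_of_real r * exp (\<i> * complex_of_real t)) - (1 - complex_of_real 1 * exp (\<i> * complex_of_real t))
       = complex_of_real (1 - r) * exp (\<i> * complex_of_real t)" by (simp add: algebra_simps)
    also have "cmod \<dots> = 1 - r" using rt by (simp add: norm_mult del: of_real_diff)
    finally have AB: "\<bar>A - B\<bar> \<le> 1 - r" .
    have "\<bar>Lf r t - Lf 1 t\<bar> = \<bar>ln A - ln B\<bar>" unfolding Lf_def A_def B_def by simp
    also have "\<dots> \<le> \<bar>A - B\<bar>/c" by (rule ln_lip[OF c cA cB])
    also have "\<dots> \<le> (1-r)/c" using AB c by (simp add: divide_right_mono)
    finally show "\<bar>Lf r t - Lf 1 t\<bar> \<le> (1-r)/c" .
  qed
qed



lemma deriv_C:
  assumes "0 < t" "t < 2*pi"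
  shows "(clausen2 has_real_derivative Lf 1 t) (at t)"
proof -
  define a where "a = t/2"
  define b where "b = (t + 2*pi)/2"
  define S where "S = {a<..<b}"
  have ab: "0 < a" "a \<le> b" "b < 2*pi" "t \<in> S" using assms by (auto simp: a_def b_def S_def)
  obtain c where c: "c > 0" and unif: "\<And>r x. 1/2 \<le> r \<Longrightarrow> r \<le> 1 \<Longrightarrow> a \<le> x \<Longrightarrow> x \<le> b \<Longrightarrow> \<bar>Lf r x - Lf 1 x\<bar> \<le> (1-r)/c"
    using Lf_unif[OF ab(1-3)] by blast
  define rr where "rr n = 1 - 1/(real n + 2)" for n
  have rr: "1/2 \<le> rr n" "rr n < 1" "0 \<le> rr n" for n
    unfolding rr_def by (auto simp: field_simps)
  have rrlim: "rr \<longlonglongrightarrow> 1" unfolding rr_def by real_asymp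
  have limH: "(\<lambda>n. Hs (rr n) x) \<longlonglongrightarrow> clausen2 x" for x
  proof -
    have "((\<lambda>r. Hs r x) \<circ> rr) \<longlonglongrightarrow> Hs 1 x"
      using cont_Hs_r[of x] rr rrlim unfolding continuous_on_sequentially
      by (metis atLeastAtMost_iff order_less_imp_le order_refl zero_le_one)
    then show ?thesis by (simp add: Hs_one o_def)
  qed
  have derf: "(Hs (rr n) has_derivative (\<lambda>h. Lf (rr n) x * h)) (at x within S)" for n x
  proof -
    have "(Hs (rr n) has_real_derivative Lf (rr n) x) (at x)"
      by (rule deriv_Hs) (use rr in auto)
    then have "(Hs (rr n) has_derivative (\<lambda>h. Lf (rr n) x * h)) (at x)"
      by (simp add: has_field_derivative_def)
    then show ?thesis by (rule has_derivative_at_withinI)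
  qed
  have nle: "\<forall>\<^sub>F n in sequentially. \<forall>x\<in>S. \<forall>h. norm (Lf (rr n) x * h - Lf 1 x * h) \<le> e * norm h"
    if e: "e > 0" for e
  proof -
    obtain N :: nat where N: "1/(e*c) < real N" using reals_Archimedean2 by blast
    show ?thesis unfolding eventually_sequentially
    proof (intro exI[of _ N] allI impI ballI)
      fix n x h assume n: "N \<le> n" and x: "x \<in> S"
      have "1/(e*c) < real n + 2" using N n by linarith
      then have "1 < (real n + 2) * (e*c)" using e c by (simp add: divide_less_eq mult.commute)
      then have h1: "1 \<le> e * ((real n + 2) * c)" by (simp add: algebra_simps)
      have X: "0 < (real n + 2) * c" using c by simp
      have "1 / ((real n + 2) * c) \<le> e" using X h1 by (simp add: divide_le_eq)
      then have "1/(real n + 2) / c \<le> e" by simp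
      moreover have "(1 - rr n)/c = 1/(real n + 2) / c" by (simp add: rr_def)
      moreover have "\<bar>Lf (rr n) x - Lf 1 x\<bar> \<le> (1 - rr n)/c"
        using unif[of "rr n" x] rr[of n] x by (auto simp: S_def)
      ultimately have d: "\<bar>Lf (rr n) x - Lf 1 x\<bar> \<le> e" by linarith
      have "norm (Lf (rr n) x * h - Lf 1 x * h) = \<bar>Lf (rr n) x - Lf 1 x\<bar> * \<bar>h\<bar>"
        by (simp add: abs_mult left_diff_distrib[symmetric])
      also have "\<dots> \<le> e * \<bar>h\<bar>" using d by (simp add: mult_right_mono)
      finally show "norm (Lf (rr n) x * h - Lf 1 x * h) \<le> e * norm h" by simp
    qed
  qed
  have "convex S" by (simp add: S_def)
  from has_derivative_sequence[OF this derf nle ab(4) limH[of t]]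
  obtain g where g: "\<And>x. x \<in> S \<Longrightarrow> (\<lambda>n. Hs (rr n) x) \<longlonglongrightarrow> g x \<and> (g has_derivative (\<lambda>h. Lf 1 x * h)) (at x within S)"
    by blast
  have gC: "\<And>x. x \<in> S \<Longrightarrow> g x = clausen2 x"
    using g limH LIMSEQ_unique by blast
  have "(g has_derivative (\<lambda>h. Lf 1 t * h)) (at t)"
    using g[OF ab(4)] at_within_open[OF ab(4)] by (simp add: S_def)
  then have "(g has_real_derivative Lf 1 t) (at t)" by (simp add: has_field_derivative_def)
  then show ?thesis
    by (rule has_field_derivative_transform_within_open[where S=S]) (use ab gC in \<open>auto simp: S_def\<close>)
qed



lemma sinpos: "0 < t \<Longrightarrow> t < 2*pi \<Longrightarrow> 0 < sin (t/2)"
  by (intro sin_gt_zero) auto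

lemma cmod1:
  assumes "0 < t" "t < 2*pi"
  shows "cmod (1 - complex_of_real 1 * exp (\<i> * complex_of_real t)) = 2 * sin (t/2)"
proof -
  have s: "0 < sin (t/2)" using sinpos assms .
  have "(cmod (1 - complex_of_real 1 * exp (\<i> * complex_of_real t)))^2 = 1 - 2*1*cos t + 1^2"
    by (rule normsq)
  also have "\<dots> = (2 * sin (t/2))^2" using cos_double_sin[of "t/2"] by (simp add: power2_eq_square)
  finally show ?thesis using s by (subst (asm) power2_eq_iff_nonneg) auto
qed

lemma Lf1: "0 < t \<Longrightarrow> t < 2*pi \<Longrightarrow> Lf 1 t = - ln (2 * sin (t/2))"
  unfolding Lf_def using cmod1 by presburger

lemma Lf1_ge: "0 < t \<Longrightarrow> t < 2*pi \<Longrightarrow> - ln 2 \<le> Lf 1 t"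
proof -
  assume t: "0 < t" "t < 2*pi"
  have "ln (2 * sin (t/2)) \<le> ln 2" using sinpos[OF t] by (subst ln_le_cancel_iff) auto
  then show ?thesis using Lf1[OF t] by simp
qed

lemma sin_prod: fixes a b :: real shows "sin (a + b) * sin (a - b) = sin a ^ 2 - sin b ^ 2"
proof -
  have "sin (a + b) * sin (a - b) = (sin a * cos b)^2 - (cos a * sin b)^2"
    unfolding sin_add sin_diff by (simp add: power2_eq_square algebra_simps)
  also have "\<dots> = sin a ^ 2 * (1 - sin b ^ 2) - (1 - sin a ^ 2) * sin b ^ 2"
    by (simp add: power_mult_distrib cos_squared_eq)
  also have "\<dots> = sin a ^ 2 - sin b ^ 2" by (simp add: algebra_simps)
  finally show ?thesis .
qed

lemma Lf_midconv:
  assumes "0 < x - u" "x + u < 2*pi" "0 \<le> u"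
  shows "2 * Lf 1 x \<le> Lf 1 (x + u) + Lf 1 (x - u)"
proof -
  have x: "0 < x" "x < 2*pi" using assms by auto
  have p1: "0 < sin ((x+u)/2)" using sinpos assms by auto
  have p2: "0 < sin ((x-u)/2)" using sinpos assms by auto
  have p3: "0 < sin (x/2)" using sinpos x by auto
  have "sin ((x+u)/2) * sin ((x-u)/2) = sin (x/2)^2 - sin (u/2)^2"
    using sin_prod[of "x/2" "u/2"] by (simp add: add_divide_distrib diff_divide_distrib)
  also have "\<dots> \<le> sin (x/2)^2" by simp
  finally have le: "(2 * sin ((x+u)/2)) * (2 * sin ((x-u)/2)) \<le> (2 * sin (x/2)) * (2 * sin (x/2))"
    by (simp add: power2_eq_square)
  have "ln (2 * sin ((x+u)/2)) + ln (2 * sin ((x-u)/2)) = ln ((2 * sin ((x+u)/2)) * (2 * sin ((x-u)/2)))"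
    using ln_mult[of "2 * sin ((x+u)/2)" "2 * sin ((x-u)/2)"] p1 p2 by simp
  also have "\<dots> \<le> ln ((2 * sin (x/2)) * (2 * sin (x/2)))"
    using le p1 p2 p3 by (subst ln_le_cancel_iff) auto
  also have "\<dots> = 2 * ln (2 * sin (x/2))" by (subst ln_mult) (use p3 in auto)
  finally show ?thesis using Lf1[OF x] Lf1[of "x+u"] Lf1[of "x-u"] assms by simp
qed

lemma midpoint:
  assumes "0 \<le> s" "0 < x - s" "x + s < 2*pi"
  shows "2 * s * Lf 1 x \<le> clausen2 (x + s) - clausen2 (x - s)"
proof -
  define \<phi> where "\<phi> u = clausen2 (x + u) - clausen2 (x - u) - 2 * u * Lf 1 x" for u
  have der: "(\<phi> has_real_derivative (Lf 1 (x + u) + Lf 1 (x - u) - 2 * Lf 1 x)) (at u)"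
    if "0 \<le> u" "u \<le> s" for u
  proof -
    have d1: "(clausen2 has_real_derivative Lf 1 (x + u)) (at (x + u))"
      by (rule deriv_C) (use that assms in auto)
    have d2: "(clausen2 has_real_derivative Lf 1 (x - u)) (at (x - u))"
      by (rule deriv_C) (use that assms in auto)
    have g1: "((\<lambda>u. x + u) has_real_derivative 1) (at u)" by (auto intro!: derivative_eq_intros)
    have g2: "((\<lambda>u. x - u) has_real_derivative -1) (at u)" by (auto intro!: derivative_eq_intros)
    have c1: "((\<lambda>u. clausen2 (x + u)) has_real_derivative Lf 1 (x + u) * 1) (at u)"
      by (rule DERIV_chain2[of clausen2 "Lf 1 (x+u)" "\<lambda>u. x + u" u 1 UNIV]) (use d1 g1 in simp_all)
    have c2: "((\<lambda>u. clausen2 (x - u)) has_real_derivative Lf 1 (x - u) * -1) (at u)"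
      by (rule DERIV_chain2[of clausen2 "Lf 1 (x-u)" "\<lambda>u. x - u" u "-1" UNIV]) (use d2 g2 in simp_all)
    have c3: "((\<lambda>u. 2 * u * Lf 1 x) has_real_derivative 2 * Lf 1 x) (at u)"
      by (auto intro!: derivative_eq_intros)
    have "(\<phi> has_real_derivative (Lf 1 (x + u) * 1 - Lf 1 (x - u) * -1 - 2 * Lf 1 x)) (at u)"
      unfolding \<phi>_def by (intro DERIV_diff c1 c2 c3)
    then show ?thesis by simp
  qed
  have "\<phi> 0 \<le> \<phi> s"
  proof (rule DERIV_nonneg_imp_increasing_open[OF assms(1)])
    fix u assume "0 < u" "u < s"
    then show "\<exists>y. (\<phi> has_real_derivative y) (at u) \<and> 0 \<le> y"
      using der[of u] Lf_midconv[of x u] assms by (intro exI[of _ "Lf 1 (x + u) + Lf 1 (x - u) - 2 * Lf 1 x"]) auto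
  next
    show "continuous_on {0..s} \<phi>"
      using der by (intro continuous_at_imp_continuous_on ballI) (auto intro: DERIV_isCont)
  qed
  then show ?thesis by (simp add: \<phi>_def)
qed

lemma right_end:
  assumes "0 \<le> s" "0 < y - s" "y < 2*pi"
  shows "- s * ln 2 \<le> clausen2 y - clausen2 (y - s)"
proof -
  define chi where "chi u = clausen2 u + u * ln 2" for u
  have der: "(chi has_real_derivative (Lf 1 u + ln 2)) (at u)" if "y - s \<le> u" "u \<le> y" for u
  proof -
    have d1: "(clausen2 has_real_derivative Lf 1 u) (at u)"
      by (rule deriv_C) (use that assms in auto)
    show ?thesis unfolding chi_def
      by (rule derivative_eq_intros d1 refl | simp)+
  qed
  have "chi (y - s) \<le> chi y"
  proof (rule DERIV_nonneg_imp_increasing_open[of "y - s" y chi])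
    fix u assume "y - s < u" "u < y"
    then show "\<exists>z. (chi has_real_derivative z) (at u) \<and> 0 \<le> z"
      using der[of u] Lf1_ge[of u] assms by (intro exI[of _ "Lf 1 u + ln 2"]) auto
  next
    show "continuous_on {y-s..y} chi"
      using der by (intro continuous_at_imp_continuous_on ballI) (auto intro: DERIV_isCont)
  qed (use assms in auto)
  then show ?thesis by (simp add: chi_def algebra_simps)
qed

lemma left_end:
  assumes "0 < u" "u < 2*pi"
  shows "u * (1 - ln u) \<le> clausen2 u"
proof -
  define \<psi> where "\<psi> v = clausen2 v - v + v * ln v" for v
  have der: "(\<psi> has_real_derivative (Lf 1 v + ln v)) (at v)" if "0 < v" "v < 2*pi" for v
  proof -
    have d1: "(clausen2 has_real_derivative Lf 1 v) (at v)"
      by (rule deriv_C) (use that in auto)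
    show ?thesis unfolding \<psi>_def
      by (rule derivative_eq_intros d1 refl | use that in simp)+
  qed
  have mono: "\<psi> e \<le> \<psi> u" if "0 < e" "e < u" for e
  proof (rule DERIV_nonneg_imp_increasing_open[of e u \<psi>])
    fix v assume v: "e < v" "v < u"
    then have v0: "0 < v" "v < 2*pi" using that assms by auto
    have "2 * sin (v/2) \<le> v" using sin_x_le_x[of "v/2"] v0 by simp
    then have "ln (2 * sin (v/2)) \<le> ln v" using sinpos[OF v0] v0 by (subst ln_le_cancel_iff) auto
    then have "0 \<le> Lf 1 v + ln v" using Lf1[OF v0] by simp
    then show "\<exists>z. (\<psi> has_real_derivative z) (at v) \<and> 0 \<le> z"
      using der[OF v0] by blast
  next
    show "continuous_on {e..u} \<psi>"
    proof (intro continuous_at_imp_continuous_on ballI)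
      fix x assume "x \<in> {e..u}"
      then have "0 < x" "x < 2*pi" using that assms by auto
      then show "isCont \<psi> x" using der DERIV_isCont by blast
    qed
  qed (use that in auto)
  have lim1: "(clausen2 \<longlongrightarrow> 0) (at_right 0)"
  proof -
    have "isCont clausen2 0" using cont_C by (simp add: continuous_on_eq_continuous_at)
    then have "(clausen2 \<longlongrightarrow> clausen2 0) (at 0)" by (simp add: isCont_def)
    then show ?thesis by (simp add: C0 filterlim_at_split)
  qed
  have lim2: "((\<lambda>v::real. - v + v * ln v) \<longlongrightarrow> 0) (at_right 0)" by real_asymp
  have "(\<psi> \<longlongrightarrow> 0 + 0) (at_right 0)"
    unfolding \<psi>_def using tendsto_add[OF lim1 lim2] by (simp add: algebra_simps)
  moreover have "eventually (\<lambda>e. \<psi> e \<le> \<psi> u) (at_right 0)"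
    using mono assms by (intro eventually_at_rightI[of 0 u]) auto
  ultimately have "0 \<le> \<psi> u" by (intro tendsto_upperbound) auto
  then show ?thesis by (simp add: \<psi>_def algebra_simps)
qed



lemma factor:
  assumes "0 < x" "x < 2*pi"
  shows "inverse (cmod (exp (\<i> * complex_of_real x) - 1)) = exp (Lf 1 x)"
proof -
  have "cmod (exp (\<i> * complex_of_real x) - 1) = cmod (1 - complex_of_real 1 * exp (\<i> * complex_of_real x))"
    by (simp add: norm_minus_commute)
  also have "\<dots> = 2 * sin (x/2)" by (rule cmod1[OF assms])
  finally have e: "cmod (exp (\<i> * complex_of_real x) - 1) = 2 * sin (x/2)" .
  have p: "0 < 2 * sin (x/2)" using sinpos[OF assms] by simp
  show ?thesis unfolding e Lf1[OF assms] exp_minus using p by simp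
qed

lemma pi3: "pi^3 < (32::real)"
proof -
  have "pi < 3.1416" using pi_approx by simp
  then have "pi^3 < (3.1416::real)^3" by (intro power_strict_mono) (auto simp: pi_gt_zero less_imp_le)
  also have "\<dots> < 32" by (simp add: power_divide)
  finally show ?thesis .
qed

theorem proposition3p2:
  fixes N :: nat and \<theta> :: real
  assumes "N \<ge> 2" and "0 < \<theta>" and "\<theta> < 2 * pi"
  shows "(\<Prod>j=1..N. inverse (cmod (exp (\<i> * complex_of_real (real j * \<theta> / real N)) - 1)))
           < 2 * real N / (\<theta> * sin (\<theta> / 2)) * exp (real N * clausen2 \<theta> / \<theta>)"
proof -
  define h where "h = \<theta> / real N"
  define F where "F = Lf 1"
  define C where "C = clausen2"
  have N2: "real N \<ge> 2" using assms(1) by simp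
  have h0: "0 < h" using assms N2 by (simp add: h_def)
  have hN: "real N * h = \<theta>" using N2 by (simp add: h_def)
  have h2: "2 * h \<le> \<theta>" using hN N2 h0 by (metis mult_right_mono less_imp_le)
  have hpi: "h < pi" using h2 assms(3) by simp
  have jh: "real j * \<theta> / real N = real j * h" for j by (simp add: h_def)
  have xj: "0 < real j * h \<and> real j * h < 2*pi" if "j \<in> {1..N}" for j
  proof -
    have "real j * h \<le> real N * h" using that h0 by (intro mult_right_mono) auto
    then show ?thesis using that h0 hN assms by auto
  qed
  define S where "S = (\<Sum>j=1..N. F (real j * h))"
  have LHS: "(\<Prod>j=1..N. inverse (cmod (exp (\<i> * complex_of_real (real j * \<theta> / real N)) - 1))) = exp S"
    unfolding S_def exp_sum[OF finite_atLeastAtMost] jh F_def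
  proof (rule prod.cong[OF refl])
    fix j assume "j \<in> {1..N}"
    then show "inverse (cmod (exp (\<i> * complex_of_real (real j * h)) - 1)) = exp (Lf 1 (real j * h))"
      using factor xj by blast
  qed
  define S1 where "S1 = (\<Sum>j=1..N-1. F (real j * h))"
  have SS1: "S = S1 + F \<theta>"
  proof -
    have "N = Suc (N - 1)" using assms(1) by simp
    then have "S = (\<Sum>j=1..Suc (N-1). F (real j * h))" unfolding S_def by simp
    also have "\<dots> = S1 + F (real (Suc (N-1)) * h)" unfolding S1_def by (subst sum.cl_ivl_Suc) auto
    also have "real (Suc (N-1)) * h = \<theta>" using \<open>N = Suc (N - 1)\<close> hN by (metis)
    finally show ?thesis .
  qed
  define D where "D j = C (real j * h - h/2)" for j :: nat
  have mid: "h * F (real j * h) \<le> D (Suc j) - D j" if "j \<in> {1..N-1}" for j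
  proof -
    have j1: "1 \<le> real j" "real j \<le> real N - 1" using that assms(1) by auto
    have "1 * h \<le> real j * h" using j1 h0 by (intro mult_right_mono) auto
    then have a: "0 < real j * h - h/2" using h0 by simp
    have "real j * h \<le> (real N - 1) * h" using j1 h0 by (intro mult_right_mono) auto
    then have b: "real j * h + h/2 < 2*pi" using hN assms h0 by (simp add: algebra_simps)
    have "2 * (h/2) * F (real j * h) \<le> C (real j * h + h/2) - C (real j * h - h/2)"
      unfolding F_def C_def by (rule midpoint) (use a b h0 in auto)
    moreover have "D (Suc j) = C (real j * h + h/2)" by (simp add: D_def algebra_simps)
    ultimately show ?thesis by (simp add: D_def)
  qed
  have "h * S1 = (\<Sum>j=1..N-1. h * F (real j * h))" unfolding S1_def by (simp add: sum_distrib_left)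
  also have "\<dots> \<le> (\<Sum>j=1..N-1. D (Suc j) - D j)" by (rule sum_mono) (rule mid)
  also have "\<dots> = D (Suc (N-1)) - D 1" by (rule sum_Suc_diff) (use assms(1) in simp)
  also have "D (Suc (N-1)) = C (\<theta> - h/2)" using assms(1) hN by (simp add: D_def)
  also have "D 1 = C (h/2)" by (simp add: D_def)
  finally have st1: "h * S1 \<le> C (\<theta> - h/2) - C (h/2)" .
  have st2: "- (h/2) * ln 2 \<le> C \<theta> - C (\<theta> - h/2)"
    unfolding C_def by (rule right_end) (use h0 h2 assms in auto)
  have st3: "(h/2) * (1 - ln (h/2)) \<le> C (h/2)"
    unfolding C_def by (rule left_end) (use h0 hpi in auto)
  have lnh2: "ln (h/2) = ln h - ln 2" using h0 by (simp add: ln_div)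
  have "h * S1 \<le> C \<theta> + h * ((ln h - 1)/2)"
  proof -
    have e1: "h/2 * (1 - (ln h - ln 2)) = h/2 - h/2*ln h + h/2*ln 2" by (simp add: algebra_simps)
    have e2: "h * ((ln h - 1)/2) = h/2*ln h - h/2" by (simp add: field_simps)
    have e3: "- (h/2) * ln 2 \<le> C \<theta> - C (\<theta> - h/2) \<Longrightarrow> - (h/2*ln 2) \<le> C \<theta> - C (\<theta> - h/2)" by simp
    have st3': "h/2 * (1 - (ln h - ln 2)) \<le> C (h/2)" using st3 lnh2 by simp
    show ?thesis using st1 st2 st3' e1 e2 by argo
  qed
  then have S1b: "S1 \<le> C \<theta> / h + (ln h - 1)/2"
    using h0 by (simp add: field_simps)
  have "h^3 < 32" using hpi h0 pi3 by (smt (verit) power_strict_mono zero_less_numeral)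
  then have "ln (h^3) < ln (2^5)" using h0 by (subst ln_less_cancel_iff) auto
  moreover have "ln (2^5::real) = 5 * ln 2" by (subst ln_realpow) auto
  ultimately have "3 * ln h < 5 * ln 2" using h0 by (simp add: ln_realpow)
  then have key: "(ln h - 1)/2 < 2 * ln 2 - ln h" using ln_2_less_1 by argo
  have s0: "0 < sin (\<theta>/2)" using sinpos assms by auto
  have F\<theta>: "F \<theta> = - ln 2 - ln (sin (\<theta>/2))"
    unfolding F_def using Lf1[of \<theta>] assms s0 by (simp add: ln_mult)
  define Q where "Q = ln 2 - ln h - ln (sin (\<theta>/2)) + C \<theta> / h"
  have "S < Q" unfolding Q_def using SS1 S1b key F\<theta> by linarith
  then have "exp S < exp Q" by simp
  also have "exp Q = 2 * real N / (\<theta> * sin (\<theta> / 2)) * exp (real N * clausen2 \<theta> / \<theta>)"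
  proof -
    have "exp Q = exp (ln (2 / (h * sin (\<theta>/2)))) * exp (C \<theta> / h)"
      unfolding Q_def using h0 s0 by (simp add: exp_add[symmetric] ln_div ln_mult)
    also have "exp (ln (2 / (h * sin (\<theta>/2)))) = 2 / (h * sin (\<theta>/2))" using h0 s0 by simp
    also have "2 / (h * sin (\<theta>/2)) = 2 * real N / (\<theta> * sin (\<theta> / 2))"
      using N2 by (simp add: h_def field_simps)
    also have "C \<theta> / h = real N * clausen2 \<theta> / \<theta>" using N2 by (simp add: h_def C_def field_simps)
    finally show ?thesis .
  qed
  finally show ?thesis unfolding LHS .
qed

end
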